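(* Let $p$ be the POP of length 4 defined by the single relation $1>4$ (labels $2,3$ isolated); equivalently, avoiding $p$ means avoiding all 12 patterns of length 4 whose first entry exceeds the last. Let $a(n)=|S_n(p)|$. Then $a(0)=a(1)=1$, $a(2)=2$, $a(3)=6$, and for $n\geq 4$, $$a(n)=a(n-1)+a(n-2)+3a(n-3)+a(n-4).$$ Moreover, $$\sum_{n\geq 0}a(n)x^n=\frac{1}{1-x-x^2-3x^3-x^4}.$$
   Context: An $n$-permutation is a word $\pi=\pi_1\cdots\pi_n$ containing each of $1,\ldots,n$ exactly once; $S_n$ is the set of $n$-permutations ($S_0$ consists of the empty permutation). A partially ordered pattern (POP) $p$ of length $k$ is a partial order on the label set $\{1,\ldots,k\}$; it is described by a set of generating relations, where a relation $x>y$ means that in an occurrence the entry in the $x$-th chosen position must be larger than the entry in the $y$-th chosen position, and labels not involved in any relation are unconstrained. An $n$-permutation $\pi$ contains $p$ if there are indices $1\leq i_1<\cdots<i_k\leq n$ such that $\pi_{i_x}>\pi_{i_y}$ whenever $x>y$ in the partial order; otherwise $\pi$ avoids $p$. $S_n(p)$ denotes the set of $n$-permutations avoiding $p$. *)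

theory Defs
  imports Main "HOL-Computational_Algebra.Formal_Power_Series"
begin

definition perms :: "nat \<Rightarrow> nat list set" where
  "perms n = {w. length w = n \<and> distinct w \<and> set w = {1..n}}"

text \<open>A POP of length k is given by its generating relations: a pair (x,y)
  stands for the relation x > y between labels in {1..k}.\<close>
definition contains_pop :: "nat list \<Rightarrow> nat \<Rightarrow> (nat \<times> nat) set \<Rightarrow> bool" where
  "contains_pop w k R \<longleftrightarrow>
     (\<exists>i :: nat \<Rightarrow> nat. (\<forall>x\<in>{1..k}. \<forall>y\<in>{1..k}. x < y \<longrightarrow> i x < i y)
        \<and> (\<forall>x\<in>{1..k}. i x < length w)
        \<and> (\<forall>(x, y)\<in>R. w ! i x > w ! i y))"

definition avoiders :: "nat \<Rightarrow> nat \<Rightarrow> (nat \<times> nat) set \<Rightarrow> nat list set" where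
  "avoiders n k R = {w \<in> perms n. \<not> contains_pop w k R}"

end

theory Submission
  imports Defs
begin

definition good :: "nat list \<Rightarrow> bool" where
  "good w \<longleftrightarrow> (\<forall>i j. i + 3 \<le> j \<longrightarrow> j < length w \<longrightarrow> w ! i < w ! j)"

lemma contains_iff:
  assumes "distinct w"
  shows "contains_pop w 4 {(1,4)} \<longleftrightarrow> \<not> good w"
proof
  assume "contains_pop w 4 {(1,4)}"
  then obtain i where h1: "\<forall>x\<in>{1..4::nat}. \<forall>y\<in>{1..4}. x<y \<longrightarrow> i x < i y"
    and h2: "\<forall>x\<in>{1..4::nat}. i x < length w" and h3: "w ! i 1 > w ! i 4"
    unfolding contains_pop_def by auto
  have "i 1 < i 2" "i 2 < i 3" "i 3 < i 4" using h1 by auto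
  moreover have "i 4 < length w" using h2 by auto
  ultimately have "i 1 + 3 \<le> i 4" "i 4 < length w" by auto
  then show "\<not> good w" using h3 unfolding good_def by force
next
  assume "\<not> good w"
  then obtain p q where pq: "p+3 \<le> q" "q < length w" "\<not> w!p < w!q" by (auto simp: good_def)
  then have "w!p \<noteq> w!q" using assms by (simp add: nth_eq_iff_index_eq)
  with pq have gt: "w!p > w!q" by simp
  define i where "i x = (if x=1 then p else if x=2 then p+1 else if x = (3::nat) then p+2 else q)" for x
  show "contains_pop w 4 {(1,4)}" unfolding contains_pop_def
    apply (rule exI[of _ i])
    using pq gt by (auto simp: i_def)
qed


definition B :: "nat list list" where
  "B = [[1],[2,1],[2,3,1],[3,1,2],[3,2,1],[2,4,1,3]]"

lemma take_nth_map: "k \<le> length w \<Longrightarrow> take k w = map ((!) w) [0..<k]"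
  by (simp add: list_eq_iff_nth_eq)

lemma decomp:
  assumes "w \<in> perms n" "good w" "n \<ge> 1"
  shows "\<exists>b\<in>set B. length b \<le> n \<and> take (length b) w = b"
proof -
  have len: "length w = n" and dist: "distinct w" and sw: "set w = {1..n}"
    using assms(1) by (auto simp: perms_def)
  have inset: "\<exists>p<n. w!p = k" if "k \<in> {1..n}" for k
    using that sw len by (metis in_set_conv_nth)
  have g: "w!i < w!j" if "i+3 \<le> j" "j < n" for i j
    using assms(2) that len by (auto simp: good_def)
  have inj: "p = q" if "w!p = w!q" "p < n" "q < n" for p q
    using that dist len by (simp add: nth_eq_iff_index_eq)
  have vr: "w!p \<in> {1..n}" if "p < n" for p using that sw len by (metis nth_mem)
  have w0: "w!0 \<le> 3"
  proof (rule ccontr)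
    assume c: "\<not> w!0 \<le> 3"
    have "w!0 \<le> n" using vr[of 0] assms(3) by auto
    then have "1 \<in> {1..n}" "2 \<in> {1..n}" "3 \<in> {1..n::nat}" using c by auto
    then obtain p1 p2 p3 where p: "p1<n" "w!p1 = 1" "p2<n" "w!p2=2" "p3<n" "w!p3=3"
      using inset by meson
    have "p1 \<noteq> 0" "p2 \<noteq> 0" "p3 \<noteq> 0"
      using c p(2,4,6) by (metis eval_nat_numeral(3) le_SucI nle_le numeral_2_eq_2 one_le_numeral)+
    moreover have "p1 < 3" "p2 < 3" "p3 < 3"
      using g[of 0 p1] g[of 0 p2] g[of 0 p3] p c by (auto simp: not_less[symmetric])
    moreover have "p1 \<noteq> p2" "p1 \<noteq> p3" "p2 \<noteq> p3" using p by auto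
    ultimately show False by linarith
  qed
  have w0ge: "w!0 \<ge> 1" using vr[of 0] assms(3) by auto
  consider "w!0 = 1" | "w!0 = 2" | "w!0 = 3" using w0 w0ge by linarith
  then show ?thesis
  proof cases
    case 1
    then have "take 1 w = [1]" using take_nth_map[of 1 w] len assms(3) by simp
    then show ?thesis using assms(3) unfolding B_def by (intro bexI[of _ "[1]"]) (auto simp: numeral_eq_Suc)
  next
    case 2
    then have n2: "n \<ge> 2" using vr[of 0] assms(3) by auto
    obtain p where p: "p < n" "w!p = 1" using inset[of 1] assms(3) by auto
    have "p \<noteq> 0" using p 2 by (cases p) auto
    moreover have "p < 3" using g[of 0 p] p 2 by (auto simp: not_less[symmetric])
    ultimately consider "p = 1" | "p = 2" by linarith
    then show ?thesis
    proof cases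
      case 1
      then have "take 2 w = [2,1]" using take_nth_map[of 2 w] len n2 p \<open>w!0 = 2\<close>
        by (simp add: upt_rec numeral_eq_Suc)
      then show ?thesis using n2 unfolding B_def by (intro bexI[of _ "[2,1]"]) (auto simp: numeral_eq_Suc)
    next
      case p2: 2
      have n3: "n \<ge> 3" using p p2 by auto
      define x where "x = w!1"
      have "x \<noteq> 1" "x \<noteq> 2" using inj[of 1 p] inj[of 1 0] p p2 \<open>w!0 = 2\<close> n3
        unfolding x_def by auto
      moreover have "x \<in> {1..n}" using vr[of 1] n3 x_def by auto
      ultimately have x3: "x \<ge> 3" by auto
      show ?thesis
      proof (cases "x = 3")
        case True
        then have "take 3 w = [2,3,1]" using take_nth_map[of 3 w] len n3 p p2 \<open>w!0 = 2\<close> x_def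
          by (simp add: upt_rec numeral_eq_Suc)
        then show ?thesis using n3 unfolding B_def by (intro bexI[of _ "[2,3,1]"]) (auto simp: numeral_eq_Suc)
      next
        case False
        then have n4: "n \<ge> 4" using \<open>x \<in> {1..n}\<close> x3 by auto
        obtain q where q: "q < n" "w!q = 3" using inset[of 3] n3 by auto
        have "q \<noteq> 0" "q \<noteq> 1" "q \<noteq> 2" using q p p2 \<open>w!0 = 2\<close> x_def False
          by (cases "q = 0"; cases "q = 1"; cases "q = 2"; auto)+
        moreover have "q < 4" using g[of 1 q] q x3 x_def by (auto simp: not_less[symmetric])
        ultimately have q3: "q = 3" by linarith
        have "x = 4"
        proof (rule ccontr)
          assume "x \<noteq> 4"
          then have "x \<ge> 5" using x3 False by auto
          then have "4 \<in> {1..n}" using \<open>x \<in> {1..n}\<close> by auto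
          then obtain r where r: "r < n" "w!r = 4" using inset by blast
          have "r \<noteq> 0" "r \<noteq> 1" "r \<noteq> 2" "r \<noteq> 3" using r p p2 q q3 \<open>w!0 = 2\<close> x_def \<open>x \<ge> 5\<close>
            by (cases "r = 0"; cases "r = 1"; cases "r = 2"; cases "r = 3"; auto)+
          then have "r \<ge> 4" by linarith
          then show False using g[of 1 r] r x_def \<open>x \<ge> 5\<close> by auto
        qed
        then have "take 4 w = [2,4,1,3]" using take_nth_map[of 4 w] len n4 p p2 q q3 \<open>w!0 = 2\<close> x_def
          by (simp add: upt_rec numeral_eq_Suc)
        then show ?thesis using n4 unfolding B_def by (intro bexI[of _ "[2,4,1,3]"]) (auto simp: numeral_eq_Suc)
      qed
    qed
  next
    case 3
    then have n3: "n \<ge> 3" using vr[of 0] assms(3) by auto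
    obtain p1 p2 where p: "p1<n" "w!p1 = 1" "p2<n" "w!p2=2" using inset n3 by (meson atLeastAtMost_iff le_trans one_le_numeral order_refl numeral_le_iff semiring_norm(69) semiring_norm(72))
    have "p1 \<noteq> 0" "p2 \<noteq> 0" "p1 \<noteq> p2" using p 3 by (cases p1; cases p2; auto)+
    moreover have "p1 < 3" "p2 < 3"
      using g[of 0 p1] g[of 0 p2] p 3 by (auto simp: not_less[symmetric])
    ultimately consider "p1 = 1" "p2 = 2" | "p1 = 2" "p2 = 1" by linarith
    then show ?thesis
    proof cases
      case 1
      then have "take 3 w = [3,1,2]" using take_nth_map[of 3 w] len n3 p \<open>w!0 = 3\<close>
        by (simp add: upt_rec numeral_eq_Suc)
      then show ?thesis using n3 unfolding B_def by (intro bexI[of _ "[3,1,2]"]) (auto simp: numeral_eq_Suc)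
    next
      case 2
      then have "take 3 w = [3,2,1]" using take_nth_map[of 3 w] len n3 p \<open>w!0 = 3\<close>
        by (simp add: upt_rec numeral_eq_Suc)
      then show ?thesis using n3 unfolding B_def by (intro bexI[of _ "[3,2,1]"]) (auto simp: numeral_eq_Suc)
    qed
  qed
qed


definition ext :: "nat list \<Rightarrow> nat list \<Rightarrow> nat list" where
  "ext b v = b @ map (\<lambda>x. x + length b) v"

definition G :: "nat \<Rightarrow> nat list set" where
  "G n = {w \<in> perms n. good w}"

lemma good_short: "length w \<le> 3 \<Longrightarrow> good w"
  by (auto simp: good_def)

lemma good_2413: "good [2,4,1,3]"
proof -
  have "[2,4,1,3::nat] ! i < [2,4,1,3] ! j" if "i + 3 \<le> j" "j < 4" for i j
  proof -
    have "i = 0" "j = 3" using that by auto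
    then show ?thesis by simp
  qed
  then show ?thesis by (auto simp: good_def)
qed

lemma blocks_ok: "b \<in> set B \<Longrightarrow> distinct b \<and> set b = {1..length b} \<and> good b"
  unfolding B_def using good_2413 by (auto simp: good_short)

lemma ext_good:
  assumes "distinct b" "set b = {1..length b}" "good b" "v \<in> G k"
  shows "ext b v \<in> G (length b + k)"
proof -
  let ?m = "length b"
  have v: "length v = k" "distinct v" "set v = {1..k}" "good v" using assms(4) by (auto simp: G_def perms_def)
  have sm: "set (map (\<lambda>x. x + ?m) v) = {?m+1..?m+k}"
  proof -
    have "(\<lambda>x. x + ?m) ` {1..k} = {?m+1..?m+k}"
      by (auto simp: image_iff intro!: bexI[of _ "_ - ?m"])
    then show ?thesis using v by simp
  qed
  have perm: "ext b v \<in> perms (?m + k)"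
    unfolding perms_def ext_def using assms(1,2) v sm
    by (auto simp: distinct_map inj_on_def)
  have gd: "good (ext b v)"
    unfolding good_def
  proof (intro allI impI)
    fix i j assume ij: "i + 3 \<le> j" "j < length (ext b v)"
    then have j: "j < ?m + k" using v by (simp add: ext_def)
    show "ext b v ! i < ext b v ! j"
    proof (cases "j < ?m")
      case True
      then show ?thesis using assms(3) ij by (auto simp: ext_def nth_append good_def)
    next
      case False
      note jm = False
      show ?thesis
      proof (cases "i < ?m")
        case True
        have "b ! i \<in> set b" using True by simp
        then have "b ! i \<le> ?m" using assms(2) by auto
        moreover have "v ! (j - ?m) \<in> set v" using j jm v by auto
        then have "v ! (j - ?m) \<ge> 1" using v by auto
        ultimately show ?thesis using True jm j v by (auto simp: ext_def nth_append)
      next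
        case False
        have "(i - ?m) + 3 \<le> j - ?m" "j - ?m < length v" using v(1) ij j False jm by auto
        then have "v ! (i - ?m) < v ! (j - ?m)" using v(4) unfolding good_def by blast
        then show ?thesis using False jm j v ij by (auto simp: ext_def nth_append)
      qed
    qed
  qed
  show ?thesis using perm gd by (simp add: G_def)
qed


lemma decomp_back:
  assumes "w \<in> G n" "b \<in> set B" "length b \<le> n" "take (length b) w = b"
  shows "\<exists>v\<in>G (n - length b). w = ext b v"
proof -
  let ?m = "length b"
  have w: "length w = n" "distinct w" "set w = {1..n}" "good w"
    using assms(1) by (auto simp: G_def perms_def)
  have sb: "set b = {1..?m}" using blocks_ok[OF assms(2)] by auto
  define d where "d = drop ?m w"
  have wd: "w = b @ d" using assms(4) d_def by (metis append_take_drop_id)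
  have disj: "set b \<inter> set d = {}" "distinct d" using w(2) wd by (metis distinct_append)+
  have un: "set b \<union> set d = {1..n}" using w(3) wd by simp
  have sd: "set d = {?m+1..n}"
  proof -
    have "set d = {1..n} - set b" using disj un by blast
    then show ?thesis using sb by auto
  qed
  have ld: "length d = n - ?m" using w(1) d_def by simp
  define v where "v = map (\<lambda>x. x - ?m) d"
  have dv: "d = map (\<lambda>x. x + ?m) v"
    unfolding v_def map_map by (rule sym, rule map_idI) (use sd in auto)
  have lv: "length v = n - ?m" using ld v_def by simp
  have dist: "distinct v" unfolding v_def using disj(2) sd
    by (auto simp: distinct_map inj_on_def)
  have sv: "set v = {1..n - ?m}"
  proof -
    have "(\<lambda>x. x - ?m) ` {?m+1..n} = {1..n - ?m}"
      by (auto simp: image_iff intro!: bexI[of _ "_ + ?m"])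
    then show ?thesis using sd v_def by simp
  qed
  have gv: "good v" unfolding good_def
  proof (intro allI impI)
    fix i j assume ij: "i + 3 \<le> j" "j < length v"
    then have "w ! (?m + i) < w ! (?m + j)" using w(4) w(1) lv assms(3) unfolding good_def by auto
    moreover have "d ! i = w ! (?m + i)" "d ! j = w ! (?m + j)" using ij lv ld w(1) d_def by auto
    moreover have "d ! i \<in> set d" "d ! j \<in> set d" using ij lv ld by auto
    ultimately show "v ! i < v ! j" using ij lv ld sd unfolding v_def by auto
  qed
  have "v \<in> G (n - ?m)" using lv dist sv gv by (simp add: G_def perms_def)
  moreover have "w = ext b v" using wd dv by (simp add: ext_def)
  ultimately show ?thesis by blast
qed

lemma G_eq:
  assumes "n \<ge> 1"
  shows "G n = (\<Union>b\<in>{b\<in>set B. length b \<le> n}. ext b ` G (n - length b))"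
proof
  show "G n \<subseteq> (\<Union>b\<in>{b\<in>set B. length b \<le> n}. ext b ` G (n - length b))"
  proof
    fix w assume "w \<in> G n"
    then obtain b where b: "b \<in> set B" "length b \<le> n" "take (length b) w = b"
      using decomp[of w n] assms by (auto simp: G_def)
    then obtain v where "v \<in> G (n - length b)" "w = ext b v" using decomp_back \<open>w \<in> G n\<close> by blast
    then show "w \<in> (\<Union>b\<in>{b\<in>set B. length b \<le> n}. ext b ` G (n - length b))" using b by blast
  qed
next
  show "(\<Union>b\<in>{b\<in>set B. length b \<le> n}. ext b ` G (n - length b)) \<subseteq> G n"
  proof clarify
    fix b v assume "b \<in> set B" "length b \<le> n" "v \<in> G (n - length b)"
    then show "ext b v \<in> G n" using ext_good[of b v "n - length b"] blocks_ok by auto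
  qed
qed

lemma finite_G: "finite (G n)"
proof -
  have "G n \<subseteq> {w. set w \<subseteq> {1..n} \<and> length w = n}" by (auto simp: G_def perms_def)
  moreover have "finite {w. set w \<subseteq> {1..n} \<and> length w = n}" by (rule finite_lists_length_eq) simp
  ultimately show ?thesis by (rule finite_subset)
qed

lemma ext_inj: "inj (ext b)"
  by (auto simp: inj_def ext_def inj_map_eq_map)

lemma blocks_disj: "b \<in> set B \<Longrightarrow> b' \<in> set B \<Longrightarrow> b @ x = b' @ y \<Longrightarrow> b = b'"
  unfolding B_def by auto

lemma card_G:
  assumes "n \<ge> 1"
  shows "card (G n) = (\<Sum>b\<in>{b\<in>set B. length b \<le> n}. card (G (n - length b)))"
proof -
  have "card (G n) = (\<Sum>b\<in>{b\<in>set B. length b \<le> n}. card (ext b ` G (n - length b)))"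
    unfolding G_eq[OF assms]
  proof (rule card_UN_disjoint)
    show "\<forall>i\<in>{b \<in> set B. length b \<le> n}. \<forall>j\<in>{b \<in> set B. length b \<le> n}. i \<noteq> j \<longrightarrow>
      ext i ` G (n - length i) \<inter> ext j ` G (n - length j) = {}"
      using blocks_disj by (auto simp: ext_def)
  qed (auto simp: finite_G)
  also have "\<dots> = (\<Sum>b\<in>{b\<in>set B. length b \<le> n}. card (G (n - length b)))"
    by (intro sum.cong refl card_image inj_on_subset[OF ext_inj]) auto
  finally show ?thesis .
qed

lemma card_rec:
  assumes "n \<ge> 1"
  shows "card (G n) = (if 1 \<le> n then card (G (n-1)) else 0) + (if 2 \<le> n then card (G (n-2)) else 0)
     + 3 * (if 3 \<le> n then card (G (n-3)) else 0) + (if 4 \<le> n then card (G (n-4)) else 0)"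
proof -
  have "card (G n) = (\<Sum>b\<in>set B. if length b \<le> n then card (G (n - length b)) else 0)"
    unfolding card_G[OF assms] by (simp add: sum.inter_filter)
  also have "\<dots> = sum_list (map (\<lambda>b. if length b \<le> n then card (G (n - length b)) else 0) B)"
    by (rule sum_list_distinct_conv_sum_set[symmetric]) (simp add: B_def)
  finally show ?thesis by (simp add: B_def numeral_eq_Suc)
qed


lemma avoiders_G: "avoiders n 4 {(1,4)} = G n"
  unfolding avoiders_def G_def using contains_iff by (auto simp: perms_def)

lemma G0: "card (G 0) = 1"
proof -
  have "G 0 = {[]}" by (auto simp: G_def perms_def good_def)
  then show ?thesis by simp
qed

theorem theorem3p4:
  fixes a :: "nat \<Rightarrow> nat"
  defines "a \<equiv> \<lambda>n. card (avoiders n 4 {(1, 4)})"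
  shows "a 0 = 1 \<and> a 1 = 1 \<and> a 2 = 2 \<and> a 3 = 6
    \<and> (\<forall>n\<ge>4. a n = a (n - 1) + a (n - 2) + 3 * a (n - 3) + a (n - 4))
    \<and> Abs_fps (\<lambda>n. of_nat (a n) :: rat)
        = inverse (1 - fps_X - fps_X ^ 2 - 3 * fps_X ^ 3 - fps_X ^ 4)"
proof -
  have aG: "a n = card (G n)" for n unfolding a_def avoiders_G ..
  have a0: "a 0 = 1" using G0 aG by simp
  have a1: "a 1 = 1" using card_rec[of 1] aG a0 by simp
  have a1s: "a (Suc 0) = 1" using a1 by simp
  have a2: "a 2 = 2" using card_rec[of 2] aG a0 a1 by simp
  have a3: "a 3 = 6" using card_rec[of 3] aG a0 a1 a2 by simp
  have rec: "a n = a (n - 1) + a (n - 2) + 3 * a (n - 3) + a (n - 4)" if "n \<ge> 4" for n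
    using card_rec[of n] aG that by simp
  define A where "A = Abs_fps (\<lambda>n. of_nat (a n) :: rat)"
  have "(1 - fps_X - fps_X ^ 2 - 3 * fps_X ^ 3 - fps_X ^ 4) * A
      = A - fps_X ^ 1 * A - fps_X ^ 2 * A - 3 * (fps_X ^ 3 * A) - fps_X ^ 4 * A"
    by (simp add: algebra_simps)
  also have "\<dots> = 1"
  proof (rule fps_ext)
    fix n :: nat
    consider "n = 0" | "n = 1" | "n = 2" | "n = 3" | "n \<ge> 4" by linarith
    then show "fps_nth (A - fps_X ^ 1 * A - fps_X ^ 2 * A - 3 * (fps_X ^ 3 * A) - fps_X ^ 4 * A) n = fps_nth 1 n"
    proof cases
      case 5
      then show ?thesis using rec[OF 5]
        by (simp add: fps_X_power_mult_nth A_def numeral_fps_const del: power_one_right)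
    qed (simp_all add: fps_X_power_mult_nth A_def a0 a1 a1s a2 a3 numeral_fps_const del: power_one_right)
  qed
  finally have "inverse (1 - fps_X - fps_X ^ 2 - 3 * fps_X ^ 3 - fps_X ^ 4) = A"
    by (rule fps_inverse_unique)
  then show ?thesis using a0 a1 a2 a3 rec A_def by simp
qed

end
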